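(* Let $u_0\in\ell^\infty_+(\mathbb{Z})$ with $\frac12\le u_0\le1$. Then for every $\varepsilon>0$ there exist a creation operator $\Psi_*$ and $N_0\in\mathbb{N}$ such that $$\Big|\Lambda(\Psi_*u_0,k,N)-\tfrac12\Big|\le\varepsilon\quad\text{for all }k\in\mathbb{Z},\ N\ge N_0.$$ Furthermore, the jump sequence $d$ of $\Psi_*$ satisfies $\|d\|_\infty<\infty$, with a bound depending only on $\varepsilon$.
   Context: $\ell^\infty_+(\mathbb{Z})$: bounded nonnegative sequences. Local averages: $\Lambda(x,k,N)=\frac1{2N+1}\sum_{l=-N}^N x(k-l)$. A creation operator is given by a strictly increasing $\Psi:\mathbb{Z}\to\mathbb{Z}$; its jump sequence records the gaps $d=\Psi(k+1)-\Psi(k)-1\in\mathbb{N}_0$ (number of inserted particles between consecutive original particles), and $\Psi_*x(\Psi(k))=x(k)$, $\Psi_*x(l)=0$ for $l\notin\Psi(\mathbb{Z})$. *)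

theory Defs
  imports Complex_Main
begin

definition local_avg :: "(int \<Rightarrow> real) \<Rightarrow> int \<Rightarrow> nat \<Rightarrow> real" where
  "local_avg x k N = (\<Sum>l = - int N .. int N. x (k - l)) / (2 * real N + 1)"

definition creation_map :: "(int \<Rightarrow> int) \<Rightarrow> bool" where
  "creation_map \<Psi> \<longleftrightarrow> strict_mono \<Psi>"

definition creation_push :: "(int \<Rightarrow> int) \<Rightarrow> (int \<Rightarrow> real) \<Rightarrow> int \<Rightarrow> real" where
  "creation_push \<Psi> x l = (if l \<in> range \<Psi> then x (the_inv \<Psi> l) else 0)"

definition jump_seq :: "(int \<Rightarrow> int) \<Rightarrow> int \<Rightarrow> nat" where
  "jump_seq \<Psi> k = nat (\<Psi> (k + 1) - \<Psi> k - 1)"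

end

theory Submission
  imports Defs
begin

definition Sf :: "(int \<Rightarrow> real) \<Rightarrow> int \<Rightarrow> real" where
  "Sf u k = (if 0 \<le> k then sum u {0..<k} else - sum u {k..<0})"

definition Psi :: "(int \<Rightarrow> real) \<Rightarrow> int \<Rightarrow> int" where
  "Psi u k = floor (2 * Sf u k)"

lemma Sf_step: "Sf u (k+1) = Sf u k + u k"
proof (cases "0 \<le> k")
  case True
  have "{0..<k+1} = insert k {0..<k}" using True by auto
  then show ?thesis using True by (simp add: Sf_def)
next
  case False
  show ?thesis
  proof (cases "k = -1")
    case True
    have "{-1..<0::int} = {-1}" by auto
    then show ?thesis using True by (simp add: Sf_def)
  next
    case F2: False
    have "{k..<0} = insert k {k+1..<0}" using False F2 by auto
    then show ?thesis using False F2 by (simp add: Sf_def)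
  qed
qed

context
  fixes u :: "int \<Rightarrow> real"
  assumes hu: "\<forall>k. 1/2 \<le> u k \<and> u k \<le> 1"
begin

lemma Psi_step: "Psi u k < Psi u (k+1) \<and> Psi u (k+1) \<le> Psi u k + 2"
proof -
  have a: "2 * Sf u (k+1) = 2 * Sf u k + 2 * u k" by (simp add: Sf_step)
  have b: "1 \<le> 2 * u k" "2 * u k \<le> 2" using hu[rule_format, of k] by auto
  have "floor (2 * Sf u k) + 1 \<le> floor (2 * Sf u (k+1))"
    using a b by (metis add_le_cancel_left floor_add_int floor_mono of_int_1 add.commute)
  moreover have "floor (2 * Sf u (k+1)) \<le> floor (2 * Sf u k) + 2"
  proof -
    have "floor (2 * Sf u (k+1)) \<le> floor (2 * Sf u k + 2)" using a b by (intro floor_mono) simp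
    also have "\<dots> = floor (2 * Sf u k) + 2" by simp
    finally show ?thesis .
  qed
  ultimately show ?thesis by (simp add: Psi_def)
qed

lemma Psi_mono: "strict_mono (Psi u)"
proof -
  have "Psi u i < Psi u (i + int n + 1)" for i n
  proof (induction n)
    case 0 then show ?case using Psi_step[of i] by simp
  next
    case (Suc n)
    have e: "i + int (Suc n) + 1 = i + int n + 1 + 1" by simp
    show ?case unfolding e using Psi_step[of "i + int n + 1"] Suc by linarith
  qed
  then have "i < j \<Longrightarrow> Psi u i < Psi u j" for i j
    by (metis (no_types) add.commute diff_add_cancel int_one_le_iff_zero_less less_diff_conv
        zless_imp_add1_zle zero_le_imp_eq_int add_diff_cancel_left' diff_ge_0_iff_ge
        order_less_imp_le zle_add1_eq_le le_less)
  then show ?thesis by (simp add: strict_mono_def)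
qed

lemma kf_ex: "\<exists>k. Psi u (k-1) < m \<and> m \<le> Psi u k"
proof (induction m rule: int_induct[where k = "Psi u 0"])
  case base
  show ?case using Psi_step[of "-1"] by (intro exI[of _ 0]) simp
next
  case (step1 i)
  then obtain k where k: "Psi u (k-1) < i" "i \<le> Psi u k" by blast
  show ?case
  proof (cases "i + 1 \<le> Psi u k")
 case True then show ?thesis using k by (intro exI[of _ k]) auto
  next
    case False
    then show ?thesis using k Psi_step[of k] by (intro exI[of _ "k+1"]) simp
  qed
next
  case (step2 i)
  then obtain k where k: "Psi u (k-1) < i" "i \<le> Psi u k" by blast
  show ?case
  proof (cases "Psi u (k-1) < i - 1")
    case True then show ?thesis using k by auto
  next
    case False
    then show ?thesis using k Psi_step[of "k-2"] by (intro exI[of _ "k-1"]) simp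
  qed
qed

lemma kf_uniq:
  assumes "Psi u (k-1) < m" "m \<le> Psi u k" "Psi u (j-1) < m" "m \<le> Psi u j"
  shows "k = j"
proof (rule ccontr)
  assume "k \<noteq> j"
  then have "k \<le> j - 1 \<or> j \<le> k - 1" by auto
  then show False
    using assms strict_mono_less_eq[OF Psi_mono] by (metis not_le order_trans)
qed

definition kf :: "int \<Rightarrow> int" where
  "kf m = (SOME k. Psi u (k-1) < m \<and> m \<le> Psi u k)"

lemma kf_prop: "Psi u (kf m - 1) < m \<and> m \<le> Psi u (kf m)"
  unfolding kf_def using someI_ex[OF kf_ex] .

lemma kf_eq: "Psi u (k-1) < m \<Longrightarrow> m \<le> Psi u k \<Longrightarrow> kf m = k"
  using kf_prop kf_uniq by blast

lemma push_step: "Sf u (kf (m+1)) = Sf u (kf m) + creation_push (Psi u) u m"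
proof -
  let ?k = "kf m"
  have kp: "Psi u (?k - 1) < m" "m \<le> Psi u ?k" using kf_prop by auto
  have inj: "inj (Psi u)" using Psi_mono strict_mono_imp_inj_on by blast
  show ?thesis
  proof (cases "Psi u ?k = m")
    case True
    have r: "m \<in> range (Psi u)" using True by (metis rangeI)
    have "the_inv (Psi u) m = ?k" using True the_inv_f_f[OF inj, of ?k] by simp
    then have "creation_push (Psi u) u m = u ?k"
      unfolding creation_push_def using r by simp
    moreover have "kf (m+1) = ?k + 1"
      using True Psi_step[of ?k] by (intro kf_eq) auto
    ultimately show ?thesis by (simp add: Sf_step)
  next
    case False
    have "m \<notin> range (Psi u)"
    proof
      assume "m \<in> range (Psi u)"
      then obtain j where j: "m = Psi u j" by auto
      have "Psi u (j-1) < m" using j Psi_step[of "j-1"] by simp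
      then have "j = ?k" using kf_uniq j kp by auto
      then show False using False j by simp
    qed
    then have "creation_push (Psi u) u m = 0" unfolding creation_push_def by simp
    moreover have "kf (m+1) = ?k" using kp False by (intro kf_eq) auto
    ultimately show ?thesis by simp
  qed
qed

lemma window_sum: "sum (creation_push (Psi u) u) {a..<a + int n} = Sf u (kf (a + int n)) - Sf u (kf a)"
proof (induction n)
  case 0 then show ?case by simp
next
  case (Suc n)
  have "{a..<a + int (Suc n)} = insert (a + int n) {a..<a + int n}" by auto
  then have "sum (creation_push (Psi u) u) {a..<a + int (Suc n)} =
     sum (creation_push (Psi u) u) {a..<a + int n} + creation_push (Psi u) u (a + int n)" by simp
  also have "\<dots> = Sf u (kf (a + int n + 1)) - Sf u (kf a)" using Suc push_step[of "a + int n"] by simp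
  also have "a + int n + 1 = a + int (Suc n)" by simp
  finally show ?case .
qed

lemma kf_bound: "real_of_int m \<le> 2 * Sf u (kf m) \<and> 2 * Sf u (kf m) < real_of_int m + 2"
proof -
  let ?k = "kf m"
  have kp: "Psi u (?k - 1) < m" "m \<le> Psi u ?k" using kf_prop by auto
  have "Psi u ?k \<le> Psi u (?k - 1) + 2" using Psi_step[of "?k - 1"] by simp
  then have "Psi u ?k \<le> m + 1" using kp by simp
  moreover have "real_of_int (Psi u ?k) \<le> 2 * Sf u ?k" "2 * Sf u ?k < real_of_int (Psi u ?k) + 1"
    unfolding Psi_def by linarith+
  ultimately show ?thesis using kp by linarith
qed

lemma window_bound: "\<bar>sum (creation_push (Psi u) u) {a..<a + int n} - real n / 2\<bar> < 1"
  using window_sum[of a n] kf_bound[of a] kf_bound[of "a + int n"] by (simp add: abs_less_iff)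

end

lemma avg_reindex:
  "(\<Sum>l = - int N .. int N. f (k - l)) = sum f {(k - int N)..<(k - int N) + int (2*N+1)}"
  by (rule sum.reindex_bij_witness[where i = "\<lambda>m. k - m" and j = "\<lambda>l. k - l"]) auto

theorem lemma4p2:
  shows "\<forall>\<epsilon>::real. \<epsilon> > 0 \<longrightarrow> (\<exists>B::nat. \<forall>u0 :: int \<Rightarrow> real.
           (\<forall>k. 1/2 \<le> u0 k \<and> u0 k \<le> 1) \<longrightarrow>
           (\<exists>\<Psi> N0. creation_map \<Psi> \<and>
              (\<forall>k. \<forall>N\<ge>N0. \<bar>local_avg (creation_push \<Psi> u0) k N - 1/2\<bar> \<le> \<epsilon>) \<and>
              (\<forall>k. jump_seq \<Psi> k \<le> B)))"
proof (intro allI impI)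
  fix \<epsilon> :: real assume e: "\<epsilon> > 0"
  obtain N0 :: nat where N0: "1 / \<epsilon> < real N0" using reals_Archimedean2 by blast
  show "\<exists>B::nat. \<forall>u0 :: int \<Rightarrow> real.
           (\<forall>k. 1/2 \<le> u0 k \<and> u0 k \<le> 1) \<longrightarrow>
           (\<exists>\<Psi> N0. creation_map \<Psi> \<and>
              (\<forall>k. \<forall>N\<ge>N0. \<bar>local_avg (creation_push \<Psi> u0) k N - 1/2\<bar> \<le> \<epsilon>) \<and>
              (\<forall>k. jump_seq \<Psi> k \<le> B))"
  proof (intro exI[of _ 1] allI impI)
    fix u0 :: "int \<Rightarrow> real" assume hu: "\<forall>k. 1/2 \<le> u0 k \<and> u0 k \<le> 1"
    have cm: "creation_map (Psi u0)" unfolding creation_map_def using Psi_mono[OF hu] .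
    have js: "jump_seq (Psi u0) k \<le> 1" for k
      using Psi_step[OF hu, of k] unfolding jump_seq_def by (simp add: nat_le_iff)
    have av: "\<bar>local_avg (creation_push (Psi u0) u0) k N - 1/2\<bar> \<le> \<epsilon>" if "N \<ge> N0" for k N
    proof -
      let ?s = "sum (creation_push (Psi u0) u0) {(k - int N)..<(k - int N) + int (2*N+1)}"
      have wb: "\<bar>?s - real (2*N+1) / 2\<bar> < 1" by (rule window_bound[OF hu])
      have pos: "(0::real) < 2 * real N + 1" by simp
      have la: "local_avg (creation_push (Psi u0) u0) k N = ?s / (2 * real N + 1)"
        unfolding local_avg_def avg_reindex ..
      have "local_avg (creation_push (Psi u0) u0) k N - 1/2 = (?s - real (2*N+1)/2) / (2 * real N + 1)"
        using pos by (simp add: la field_simps)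
      then have "\<bar>local_avg (creation_push (Psi u0) u0) k N - 1/2\<bar> = \<bar>?s - real (2*N+1)/2\<bar> / (2 * real N + 1)"
        using pos by simp
      also have "\<dots> \<le> 1 / (2 * real N + 1)" using wb pos by (intro divide_right_mono) auto
      also have "\<dots> \<le> \<epsilon>"
      proof -
        have "1 / \<epsilon> < 2 * real N + 1" using N0 that by linarith
        then show ?thesis using e pos by (simp add: field_simps)
      qed
      finally show ?thesis .
    qed
    show "\<exists>\<Psi> N0. creation_map \<Psi> \<and>
              (\<forall>k. \<forall>N\<ge>N0. \<bar>local_avg (creation_push \<Psi> u0) k N - 1/2\<bar> \<le> \<epsilon>) \<and>
              (\<forall>k. jump_seq \<Psi> k \<le> 1)"
      using cm js av by blast
  qed
qed

end
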